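(* Fix $x_1\in\mathbb R^d$ and $B\in\mathbb R^{d\times d}$. Then $$\left\|\mathbb E_{-1}[\mu_1]-\Sigma B^\top x_1\right\|_F^2\le S_1(x_1)+S_2(x_1),$$ where $$S_1(x_1)=\frac{2\|I-\Sigma B^\top\|_{\mathrm{op}}^2}{(n-1)^2}\exp\left(\frac2{n-1}x_1^\top B\Sigma B^\top x_1\right)\exp(2x_1^\top Bx_1)\|x_1\|_2^2,$$ $$S_2(x_1)=\frac{2\|\Sigma B^\top\|_{\mathrm{op}}^2}{(n-1)^2}\exp(4x_1^\top B\Sigma B^\top x_1)\|x_1\|_2^2.$$
   Context: $n\ge2$; $\Sigma\in\mathbb R^{d\times d}$ symmetric positive semidefinite; $x_2,\dots,x_n$ i.i.d. $\mathcal N(0,\Sigma)$; $\mathbb E_{-1}$ is expectation over $x_2,\dots,x_n$ with $x_1$ fixed. $p_{1j}=\exp(x_1^\top Bx_j)/\sum_{k=1}^n\exp(x_1^\top Bx_k)$ for $j=1,\dots,n$, and $\mu_1=\sum_{j=1}^np_{1j}x_j$. *)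

theory Defs
  imports "HOL-Analysis.Analysis" "HOL-Probability.Probability"
begin

definition std_gauss_vec :: "(real ^ 'd) measure" where
  "std_gauss_vec = distr (PiM UNIV (\<lambda>_::'d. density lborel std_normal_density)) borel
                        (\<lambda>f. \<chi> i. f i)"

text \<open>N(0, A A^T): law of A z with z standard Gaussian.\<close>
definition gauss_vec :: "real ^ 'd ^ 'd \<Rightarrow> (real ^ 'd) measure" where
  "gauss_vec A = distr std_gauss_vec borel (\<lambda>z. A *v z)"

definition attn_mu1 :: "nat \<Rightarrow> real ^ 'd ^ 'd \<Rightarrow> real ^ 'd \<Rightarrow> (nat \<Rightarrow> real ^ 'd) \<Rightarrow> real ^ 'd" where
  "attn_mu1 n B x1 xs =
     (let x = (\<lambda>j. if j = 1 then x1 else xs j);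
          Z = (\<Sum>k=1..n. exp (x1 \<bullet> (B *v x k)))
      in (\<Sum>j=1..n. (exp (x1 \<bullet> (B *v x j)) / Z) *\<^sub>R x j))"

definition op_norm :: "real ^ 'd ^ 'd \<Rightarrow> real" where
  "op_norm M = onorm (\<lambda>v. M *v v)"

end

theory Submission
  imports Defs
begin

abbreviation "N1 \<equiv> density lborel std_normal_density"

lemma N1_prob: "prob_space N1"
  by (rule prob_space_normal_density) simp

lemma sets_N1[simp, measurable_cong]: "sets N1 = sets borel" by simp
lemma space_N1[simp]: "space N1 = UNIV" by simp

lemma integral_N1:
  fixes f :: "real \<Rightarrow> real"
  assumes [measurable]: "f \<in> borel_measurable borel"
  shows "integral\<^sup>L N1 f = (\<integral>x. std_normal_density x * f x \<partial>lborel)"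
  by (subst integral_density) auto

lemma integrable_N1:
  fixes f :: "real \<Rightarrow> real"
  assumes [measurable]: "f \<in> borel_measurable borel"
  shows "integrable N1 f = integrable lborel (\<lambda>x. std_normal_density x * f x)"
  by (subst integrable_density) auto

lemma std_normal_deriv:
  "(std_normal_density has_real_derivative (- x * std_normal_density x)) (at x)"
  unfolding std_normal_density_def
  by (auto intro!: derivative_eq_intros simp: field_simps power2_eq_square)

lemma sq_half_at_top: "LIM x at_top. (x::real)\<^sup>2 / 2 :> at_top"
proof -
  have "LIM x at_top. (1/2) * (x::real)\<^sup>2 :> at_top"
    by (rule filterlim_tendsto_pos_mult_at_top[OF tendsto_const])
       (auto intro!: filterlim_pow_at_top filterlim_ident)
  then show ?thesis by (simp add: field_simps)
qed

lemma std_normal_lim_top: "(std_normal_density \<longlongrightarrow> 0) at_top"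
proof -
  have "LIM x at_top. - ((x::real)\<^sup>2 / 2) :> at_bot"
    using filterlim_uminus_at_top[THEN iffD1, OF sq_half_at_top] .
  then have "((\<lambda>x::real. exp (- ((x::real)\<^sup>2 / 2))) \<longlongrightarrow> 0) at_top"
    by (rule filterlim_compose[OF exp_at_bot])
  then have "((\<lambda>x::real. (1 / sqrt (2 * pi)) * exp (- ((x::real)\<^sup>2 / 2))) \<longlongrightarrow> (1 / sqrt (2 * pi)) * 0) at_top"
    by (intro tendsto_intros)
  then show ?thesis unfolding std_normal_density_def[abs_def] by simp
qed

lemma std_normal_lim_bot: "(std_normal_density \<longlongrightarrow> 0) at_bot"
proof -
  have e: "(\<lambda>x. std_normal_density (-x)) = std_normal_density"
    by (auto simp: std_normal_density_def)
  show ?thesis unfolding filterlim_at_bot_mirror e by (rule std_normal_lim_top)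
qed


lemma stein1:
  fixes g g' :: "real \<Rightarrow> real" and K :: real
  assumes dg: "\<And>x. (g has_real_derivative g' x) (at x)"
    and cg': "continuous_on UNIV g'"
    and bg: "\<And>x. \<bar>g x\<bar> \<le> K" and bg': "\<And>x. \<bar>g' x\<bar> \<le> K"
  shows "integrable N1 (\<lambda>x. x * g x)" "integrable N1 g'"
    "(\<integral>x. x * g x \<partial>N1) = (\<integral>x. g' x \<partial>N1)"
proof -
  have K0: "0 \<le> K" using bg[of 0] by linarith
  have cg: "continuous_on UNIV g"
    using dg by (meson DERIV_isCont continuous_at_imp_continuous_on)
  have mg[measurable]: "g \<in> borel_measurable borel" using cg by (rule borel_measurable_continuous_onI)
  have mg'[measurable]: "g' \<in> borel_measurable borel" using cg' by (rule borel_measurable_continuous_onI)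
  have i1: "integrable lborel (\<lambda>x. std_normal_density x * (x * g x))"
  proof (rule Bochner_Integration.integrable_bound)
    show "integrable lborel (\<lambda>x. K * (std_normal_density x * \<bar>x\<bar> ^ 1))"
      using integrable_std_normal_moment_abs[of 1] by (rule integrable_mult_right)
    show "AE x in lborel. norm (std_normal_density x * (x * g x)) \<le> norm (K * (std_normal_density x * \<bar>x\<bar> ^ 1))"
    proof (intro AE_I2)
      fix x
      have "\<bar>g x\<bar> * (std_normal_density x * \<bar>x\<bar>) \<le> K * (std_normal_density x * \<bar>x\<bar>)"
        by (intro mult_right_mono bg) auto
      then show "norm (std_normal_density x * (x * g x)) \<le> norm (K * (std_normal_density x * \<bar>x\<bar> ^ 1))"
        by (simp add: abs_mult ac_simps abs_of_nonneg[OF K0])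
    qed
  qed simp
  have i2: "integrable lborel (\<lambda>x. std_normal_density x * g' x)"
  proof (rule Bochner_Integration.integrable_bound)
    show "integrable lborel (\<lambda>x. K * std_normal_density x)"
      by (intro integrable_mult_right) simp
    show "AE x in lborel. norm (std_normal_density x * g' x) \<le> norm (K * std_normal_density x)"
    proof (intro AE_I2)
      fix x
      have "\<bar>g' x\<bar> * std_normal_density x \<le> K * std_normal_density x"
        by (intro mult_right_mono bg') auto
      then show "norm (std_normal_density x * g' x) \<le> norm (K * std_normal_density x)"
        by (simp add: abs_mult ac_simps abs_of_nonneg[OF K0])
    qed
  qed simp
  show "integrable N1 (\<lambda>x. x * g x)" using i1 by (subst integrable_N1) auto
  show "integrable N1 g'" using i2 by (subst integrable_N1) auto
  define f where "f x = std_normal_density x * (x * g x) - std_normal_density x * g' x" for x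
  define F where "F x = - std_normal_density x * g x" for x
  have Flim: "(F \<longlongrightarrow> 0) G" if "(std_normal_density \<longlongrightarrow> 0) G" for G
  proof (rule Lim_null_comparison)
    have "norm (F x) \<le> K * std_normal_density x" for x
    proof -
      have "\<bar>g x\<bar> * std_normal_density x \<le> K * std_normal_density x"
        by (intro mult_right_mono bg) auto
      then show ?thesis by (simp add: F_def abs_mult ac_simps)
    qed
    then show "\<forall>\<^sub>F x in G. norm (F x) \<le> K * std_normal_density x"
      by (intro always_eventually allI)
    show "((\<lambda>x. K * std_normal_density x) \<longlongrightarrow> 0) G"
      using tendsto_mult_right_zero[OF that, of K] by (simp add: ac_simps)
  qed
  have "(LBINT x=-\<infinity>..\<infinity>. f x) = 0 - 0"
  proof (rule interval_integral_FTC_integrable)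
    fix x
    show "(F has_vector_derivative f x) (at x)"
      unfolding has_real_derivative_iff_has_vector_derivative[symmetric] F_def f_def
      by (auto intro!: derivative_eq_intros std_normal_deriv dg simp: algebra_simps)
    show "isCont f x" unfolding f_def
      using cg cg' by (auto intro!: continuous_intros simp: continuous_on_eq_continuous_at std_normal_density_def)
  next
    show "set_integrable lborel (einterval (- \<infinity>) \<infinity>) f"
      unfolding set_integrable_def f_def using i1 i2 by simp
    show "((F \<circ> real_of_ereal) \<longlongrightarrow> 0) (at_right (- \<infinity>))"
      unfolding ereal_tendsto_simps1 by (rule Flim[OF std_normal_lim_bot])
    show "((F \<circ> real_of_ereal) \<longlongrightarrow> 0) (at_left \<infinity>)"
      unfolding ereal_tendsto_simps1 by (rule Flim[OF std_normal_lim_top])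
  qed simp
  then have "(\<integral>x. f x \<partial>lborel) = 0"
    by (simp add: interval_lebesgue_integral_def set_lebesgue_integral_def)
  then have "(\<integral>x. std_normal_density x * (x * g x) \<partial>lborel) = (\<integral>x. std_normal_density x * g' x \<partial>lborel)"
    unfolding f_def using i1 i2 by simp
  then show "(\<integral>x. x * g x \<partial>N1) = (\<integral>x. g' x \<partial>N1)"
    by (simp add: integral_N1)
qed


lemma mgf1:
  fixes c :: real
  shows "integrable N1 (\<lambda>x. exp (c * x))" "(\<integral>x. exp (c * x) \<partial>N1) = exp (c\<^sup>2 / 2)"
proof -
  have e: "std_normal_density x * exp (c * x) = exp (c\<^sup>2 / 2) * normal_density c 1 x" for x
  proof -
    have "- x\<^sup>2 / 2 + c * x = c\<^sup>2 / 2 + - (x - c)\<^sup>2 / (2 * 1\<^sup>2)"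
      by (simp add: field_simps power2_eq_square)
    then have "exp (- x\<^sup>2 / 2) * exp (c * x) = exp (c\<^sup>2 / 2) * exp (- (x - c)\<^sup>2 / (2 * 1\<^sup>2))"
      by (simp add: mult_exp_exp)
    then show ?thesis
      unfolding std_normal_density_def normal_density_def by simp
  qed
  show "integrable N1 (\<lambda>x. exp (c * x))"
    by (subst integrable_N1) (auto simp: e intro!: integrable_mult_right)
  show "(\<integral>x. exp (c * x) \<partial>N1) = exp (c\<^sup>2 / 2)"
    by (subst integral_N1) (auto simp: e)
qed

abbreviation "PN \<equiv> PiM UNIV (\<lambda>_::'d::finite. N1)"

lemma PN_prob: "prob_space (PN :: ('d::finite \<Rightarrow> real) measure)"
  by (intro prob_space_PiM N1_prob)

interpretation N1p: product_sigma_finite "\<lambda>_::'d. N1"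
  unfolding product_sigma_finite_def
  using N1_prob prob_space_imp_sigma_finite by blast

lemma measurable_vec_PN[measurable]:
  "(\<lambda>f. \<chi> i. f i) \<in> borel_measurable (PN :: ('d::finite \<Rightarrow> real) measure)"
proof (subst borel_measurable_euclidean_space, intro ballI)
  fix b :: "real ^ 'd" assume "b \<in> Basis"
  then obtain j where b: "b = axis j 1" by (auto simp: Basis_vec_def)
  have "(\<lambda>f::'d \<Rightarrow> real. f j) \<in> borel_measurable PN"
    by measurable
  then show "(\<lambda>f::'d \<Rightarrow> real. (\<chi> i. f i) \<bullet> b) \<in> borel_measurable PN"
    by (simp add: b inner_axis)
qed

lemma std_prob: "prob_space std_gauss_vec"
  unfolding std_gauss_vec_def
  by (intro prob_space.prob_space_distr PN_prob measurable_vec_PN)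

lemma sets_std[simp, measurable_cong]: "sets std_gauss_vec = sets borel"
  unfolding std_gauss_vec_def by simp

lemma space_std[simp]: "space std_gauss_vec = UNIV"
  unfolding std_gauss_vec_def by simp

lemma integral_std:
  fixes f :: "real ^ 'd::finite \<Rightarrow> 'b::{banach, second_countable_topology}"
  assumes [measurable]: "f \<in> borel_measurable borel"
  shows "integral\<^sup>L std_gauss_vec f = (\<integral>\<omega>. f (\<chi> i. \<omega> i) \<partial>PN)"
  unfolding std_gauss_vec_def by (rule integral_distr) measurable

lemma integrable_std:
  fixes f :: "real ^ 'd::finite \<Rightarrow> 'b::{banach, second_countable_topology}"
  assumes [measurable]: "f \<in> borel_measurable borel"
  shows "integrable std_gauss_vec f = integrable PN (\<lambda>\<omega>. f (\<chi> i. \<omega> i))"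
  unfolding std_gauss_vec_def by (rule integrable_distr_eq) measurable


lemma integrable_PN_comp:
  fixes f :: "real \<Rightarrow> 'b::{banach, second_countable_topology}"
  assumes [measurable]: "f \<in> borel_measurable borel" and "integrable N1 f"
  shows "integrable (PN :: ('d::finite \<Rightarrow> real) measure) (\<lambda>\<omega>. f (\<omega> j))"
proof -
  have "distr (PN :: ('d \<Rightarrow> real) measure) N1 (\<lambda>\<omega>. \<omega> j) = N1"
    by (rule distr_PiM_component) (auto intro: N1_prob)
  then have "integrable (distr (PN :: ('d \<Rightarrow> real) measure) N1 (\<lambda>\<omega>. \<omega> j)) f"
    using assms by simp
  then show ?thesis
    by (subst (asm) integrable_distr_eq) auto
qed

lemma integrable_N1_abs: "integrable N1 (\<lambda>x. \<bar>x\<bar>)"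
  using integrable_std_normal_moment_abs[of 1] by (subst integrable_N1) auto

lemma integrable_N1_id: "integrable N1 (\<lambda>x. x)"
  using integrable_std_normal_moment[of 1] by (subst integrable_N1) auto

lemma integrable_std_norm: "integrable (std_gauss_vec :: (real ^ 'd::finite) measure) norm"
proof -
  have "integrable (PN :: ('d \<Rightarrow> real) measure) (\<lambda>\<omega>. \<Sum>i\<in>UNIV. \<bar>\<omega> i\<bar>)"
  proof (rule Bochner_Integration.integrable_sum)
    fix i :: 'd
    show "integrable PN (\<lambda>\<omega>. \<bar>\<omega> i\<bar>)"
      using integrable_PN_comp[of "\<lambda>x. \<bar>x\<bar>" i] integrable_N1_abs by auto
  qed
  then have "integrable (PN :: ('d \<Rightarrow> real) measure) (\<lambda>\<omega>. norm (\<chi> i. \<omega> i))"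
  proof (rule Bochner_Integration.integrable_bound)
    show "AE x in PN. norm (norm (\<chi> i. x i)) \<le> norm (\<Sum>i\<in>UNIV. \<bar>x i\<bar>)"
      using norm_le_l1_cart[of "\<chi> i. _ i"] by (intro AE_I2) auto
  qed measurable
  then show ?thesis by (subst integrable_std) auto
qed

lemma mgf_vec:
  fixes u :: "real ^ 'd::finite" and c :: real
  shows "integrable std_gauss_vec (\<lambda>z. exp (c * (u \<bullet> z)))"
    "(\<integral>z. exp (c * (u \<bullet> z)) \<partial>std_gauss_vec) = exp (c\<^sup>2 * (u \<bullet> u) / 2)"
proof -
  have e: "exp (c * (u \<bullet> (\<chi> i. \<omega> i))) = (\<Prod>i\<in>UNIV. exp ((c * u $ i) * \<omega> i))" for \<omega> :: "'d \<Rightarrow> real"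
    by (simp add: inner_vec_def exp_sum[symmetric] sum_distrib_left ac_simps)
  have "integrable (PN :: ('d \<Rightarrow> real) measure) (\<lambda>\<omega>. \<Prod>i\<in>UNIV. exp ((c * u $ i) * \<omega> i))"
    by (intro N1p.product_integrable_prod mgf1) auto
  then show "integrable std_gauss_vec (\<lambda>z. exp (c * (u \<bullet> z)))"
    by (subst integrable_std) (auto simp: e)
  have "(\<integral>\<omega>. (\<Prod>i\<in>UNIV. exp ((c * u $ i) * \<omega> i)) \<partial>(PN :: ('d \<Rightarrow> real) measure))
      = (\<Prod>i\<in>UNIV. exp ((c * u $ i)\<^sup>2 / 2))"
    by (subst N1p.product_integral_prod) (auto intro: mgf1 simp: mgf1)
  also have "\<dots> = exp (c\<^sup>2 * (u \<bullet> u) / 2)"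
    by (simp add: exp_sum[symmetric] inner_vec_def sum_divide_distrib sum_distrib_left power2_eq_square ac_simps)
  finally show "(\<integral>z. exp (c * (u \<bullet> z)) \<partial>std_gauss_vec) = exp (c\<^sup>2 * (u \<bullet> u) / 2)"
    by (subst integral_std) (auto simp: e)
qed


lemma stein_vec:
  fixes h h' :: "real \<Rightarrow> real" and u :: "real ^ 'd::finite" and K :: real
  assumes dh: "\<And>t. (h has_real_derivative h' t) (at t)" and ch': "continuous_on UNIV h'"
    and bh: "\<And>t. \<bar>h t\<bar> \<le> K" and bh': "\<And>t. \<bar>h' t\<bar> \<le> K"
  shows "integrable std_gauss_vec (\<lambda>z. h (u \<bullet> z) *\<^sub>R z)"
    "(\<integral>z. h (u \<bullet> z) *\<^sub>R z \<partial>std_gauss_vec) = (\<integral>z. h' (u \<bullet> z) \<partial>std_gauss_vec) *\<^sub>R u"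
proof -
  have K0: "0 \<le> K" using bh[of 0] by linarith
  have ch: "continuous_on UNIV h"
    using dh by (meson DERIV_isCont continuous_at_imp_continuous_on)
  have mh[measurable]: "h \<in> borel_measurable borel" using ch by (rule borel_measurable_continuous_onI)
  have mh'[measurable]: "h' \<in> borel_measurable borel" using ch' by (rule borel_measurable_continuous_onI)
  interpret S: prob_space "std_gauss_vec :: (real ^ 'd) measure" by (rule std_prob)
  interpret P: prob_space "PN :: ('d \<Rightarrow> real) measure" by (rule PN_prob)
  show int: "integrable std_gauss_vec (\<lambda>z. h (u \<bullet> z) *\<^sub>R z)"
  proof (rule Bochner_Integration.integrable_bound)
    show "integrable std_gauss_vec (\<lambda>z. K * norm z)"
      by (intro integrable_mult_right integrable_std_norm)
    show "AE z in std_gauss_vec. norm (h (u \<bullet> z) *\<^sub>R z) \<le> norm (K * norm z)"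
      using K0 by (intro AE_I2) (auto intro!: mult_right_mono bh)
  qed measurable
  have inth': "integrable std_gauss_vec (\<lambda>z. h' (u \<bullet> z))"
    by (rule S.integrable_const_bound[where B=K]) (auto intro: bh')
  have "(\<integral>z. h (u \<bullet> z) *\<^sub>R z \<partial>std_gauss_vec) $ i = ((\<integral>z. h' (u \<bullet> z) \<partial>std_gauss_vec) *\<^sub>R u) $ i" for i
  proof -
    define I where "I = (UNIV :: 'd set) - {i}"
    have UI: "(UNIV :: 'd set) = insert i I" "i \<notin> I" "finite I" by (auto simp: I_def)
    have sumsplit: "(\<Sum>l\<in>UNIV. u $ l * (w(i := y)) l) = u $ i * y + (\<Sum>l\<in>I. u $ l * w l)"
      for w :: "'d \<Rightarrow> real" and y
    proof -
      have "(\<Sum>l\<in>UNIV. u $ l * (w(i := y)) l) = u $ i * y + (\<Sum>l\<in>I. u $ l * (w(i := y)) l)"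
        unfolding UI(1) using UI(2,3) by (simp add: sum.insert)
      also have "(\<Sum>l\<in>I. u $ l * (w(i := y)) l) = (\<Sum>l\<in>I. u $ l * w l)"
        using UI(2) by (intro sum.cong) auto
      finally show ?thesis .
    qed
    have ip: "u \<bullet> (\<chi> j. w j) = (\<Sum>l\<in>UNIV. u $ l * w l)" for w :: "'d \<Rightarrow> real"
      by (simp add: inner_vec_def)
    have "(\<integral>z. h (u \<bullet> z) *\<^sub>R z \<partial>std_gauss_vec) $ i = (\<integral>z. (h (u \<bullet> z) *\<^sub>R z) $ i \<partial>std_gauss_vec)"
      by (rule integral_bounded_linear[OF bounded_linear_vec_nth int, symmetric])
    also have "\<dots> = (\<integral>w. h (\<Sum>l\<in>UNIV. u $ l * w l) * w i \<partial>PN)"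
      by (subst integral_std) (auto simp: ip)
    also have "\<dots> = (\<integral>w. h (\<Sum>l\<in>UNIV. u $ l * w l) * w i \<partial>PiM (insert i I) (\<lambda>_. N1))"
      by (simp only: UI(1)[symmetric])
    also have "\<dots> = (\<integral>w. (\<integral>y. h (\<Sum>l\<in>UNIV. u $ l * (w(i := y)) l) * (w(i := y)) i \<partial>N1) \<partial>PiM I (\<lambda>_. N1))"
    proof (rule N1p.product_integral_insert[OF UI(3,2)])
      have "integrable (PN :: ('d \<Rightarrow> real) measure) (\<lambda>w. h (\<Sum>l\<in>UNIV. u $ l * w l) * w i)"
      proof (rule Bochner_Integration.integrable_bound)
        show "integrable (PN :: ('d \<Rightarrow> real) measure) (\<lambda>w. K * \<bar>w i\<bar>)"
          using integrable_PN_comp[of "\<lambda>x. K * \<bar>x\<bar>" i] integrable_N1_abs by auto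
        show "AE w in PN. norm (h (\<Sum>l\<in>UNIV. u $ l * w l) * w i) \<le> norm (K * \<bar>w i\<bar>)"
          using K0 by (intro AE_I2) (auto simp: abs_mult intro!: mult_right_mono bh)
      qed measurable
      then show "integrable (PiM (insert i I) (\<lambda>_. N1)) (\<lambda>w. h (\<Sum>l\<in>UNIV. u $ l * w l) * w i)"
        by (simp only: UI(1)[symmetric])
    qed
    also have "\<dots> = (\<integral>w. (\<integral>y. u $ i * h' (\<Sum>l\<in>UNIV. u $ l * (w(i := y)) l) \<partial>N1) \<partial>PiM I (\<lambda>_. N1))"
    proof (rule Bochner_Integration.integral_cong[OF refl])
      fix w :: "'d \<Rightarrow> real"
      define c where "c = (\<Sum>l\<in>I. u $ l * w l)"
      have "(\<integral>y. y * h (u $ i * y + c) \<partial>N1) = (\<integral>y. u $ i * h' (u $ i * y + c) \<partial>N1)"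
      proof (rule stein1(3))
        show "((\<lambda>y. h (u $ i * y + c)) has_real_derivative u $ i * h' (u $ i * y + c)) (at y)" for y
        proof -
          have "((\<lambda>y. u $ i * y + c) has_real_derivative u $ i) (at y)"
            by (auto intro!: derivative_eq_intros)
          from DERIV_chain2[OF dh this] show ?thesis by (simp add: mult.commute)
        qed
        show "continuous_on UNIV (\<lambda>y. u $ i * h' (u $ i * y + c))"
          by (intro continuous_intros continuous_on_compose2[OF ch']) auto
        show "\<bar>h (u $ i * y + c)\<bar> \<le> K * (1 + \<bar>u $ i\<bar>)" for y
        proof -
          have "K \<le> K * (1 + \<bar>u $ i\<bar>)" using K0 by (simp add: algebra_simps)
          then show ?thesis using bh[of "u $ i * y + c"] by linarith
        qed
        show "\<bar>u $ i * h' (u $ i * y + c)\<bar> \<le> K * (1 + \<bar>u $ i\<bar>)" for y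
        proof -
          have "\<bar>u $ i\<bar> * \<bar>h' (u $ i * y + c)\<bar> \<le> \<bar>u $ i\<bar> * K"
            by (intro mult_left_mono bh') auto
          moreover have "K \<ge> 0" by (rule K0)
          ultimately show ?thesis by (simp add: abs_mult algebra_simps)
        qed
      qed
      then show "(\<integral>y. h (\<Sum>l\<in>UNIV. u $ l * (w(i := y)) l) * (w(i := y)) i \<partial>N1)
          = (\<integral>y. u $ i * h' (\<Sum>l\<in>UNIV. u $ l * (w(i := y)) l) \<partial>N1)"
        by (simp only: sumsplit c_def fun_upd_same) (simp add: ac_simps)
    qed
    also have "\<dots> = u $ i * (\<integral>w. (\<integral>y. h' (\<Sum>l\<in>UNIV. u $ l * (w(i := y)) l) \<partial>N1) \<partial>PiM I (\<lambda>_. N1))"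
      by simp
    also have "(\<integral>w. (\<integral>y. h' (\<Sum>l\<in>UNIV. u $ l * (w(i := y)) l) \<partial>N1) \<partial>PiM I (\<lambda>_. N1))
        = (\<integral>w. h' (\<Sum>l\<in>UNIV. u $ l * w l) \<partial>PiM (insert i I) (\<lambda>_. N1))"
    proof (rule N1p.product_integral_insert[OF UI(3,2), symmetric])
      have "integrable (PN :: ('d \<Rightarrow> real) measure) (\<lambda>w. h' (\<Sum>l\<in>UNIV. u $ l * w l))"
        by (rule P.integrable_const_bound[where B=K]) (auto intro: bh')
      then show "integrable (PiM (insert i I) (\<lambda>_. N1)) (\<lambda>w. h' (\<Sum>l\<in>UNIV. u $ l * w l))"
        by (simp only: UI(1)[symmetric])
    qed
    also have "\<dots> = (\<integral>z. h' (u \<bullet> z) \<partial>std_gauss_vec)"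
      by (subst integral_std) (auto simp: ip UI(1)[symmetric])
    finally show ?thesis by simp
  qed
  then show "(\<integral>z. h (u \<bullet> z) *\<^sub>R z \<partial>std_gauss_vec) = (\<integral>z. h' (u \<bullet> z) \<partial>std_gauss_vec) *\<^sub>R u"
    by (simp add: vec_eq_iff)
qed


lemma inner_matvec: "v \<bullet> (A *v z) = (transpose A *v v) \<bullet> (z :: real ^ 'n::finite)"
proof -
  have "v v* A = transpose A *v v"
    by (simp add: vec_eq_iff vector_matrix_mult_def matrix_vector_mult_def transpose_def mult.commute)
  then show ?thesis using dot_lmul_matrix[of v A z] by simp
qed

lemma matvec_scaleR: "A *v (c *\<^sub>R x) = c *\<^sub>R (A *v (x :: real ^ 'n::finite))"
  by (simp add: vec_eq_iff matrix_vector_mult_def sum_distrib_left ac_simps)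

lemma measurable_matvec[measurable]: "(\<lambda>z. (A :: real ^ 'n::finite ^ 'm::finite) *v z) \<in> borel_measurable borel"
  by (intro borel_measurable_continuous_onI linear_continuous_on matrix_vector_mul_bounded_linear)

lemma G_prob: "prob_space (gauss_vec A)"
  unfolding gauss_vec_def
  by (intro prob_space.prob_space_distr std_prob) measurable


lemma sets_G[simp, measurable_cong]: "sets (gauss_vec A) = sets borel"
  unfolding gauss_vec_def by simp

lemma space_G[simp]: "space (gauss_vec A) = UNIV"
  unfolding gauss_vec_def by simp

lemma integral_G:
  fixes f :: "real ^ 'd::finite \<Rightarrow> 'b::{banach, second_countable_topology}"
  assumes [measurable]: "f \<in> borel_measurable borel"
  shows "integral\<^sup>L (gauss_vec A) f = (\<integral>z. f (A *v z) \<partial>std_gauss_vec)"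
  unfolding gauss_vec_def by (rule integral_distr) measurable

lemma integrable_G:
  fixes f :: "real ^ 'd::finite \<Rightarrow> 'b::{banach, second_countable_topology}"
  assumes [measurable]: "f \<in> borel_measurable borel"
  shows "integrable (gauss_vec A) f = integrable std_gauss_vec (\<lambda>z. f (A *v z))"
  unfolding gauss_vec_def by (rule integrable_distr_eq) measurable

lemma integrable_G_norm: "integrable (gauss_vec (A :: real ^ 'd::finite ^ 'd)) norm"
proof -
  obtain K where K: "\<And>x. norm (A *v x) \<le> norm x * K"
    using bounded_linear.bounded[OF matrix_vector_mul_bounded_linear[of A]] by blast
  have "integrable std_gauss_vec (\<lambda>z. norm (A *v z))"
  proof (rule Bochner_Integration.integrable_bound)
    show "integrable std_gauss_vec (\<lambda>z. norm z * K)"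
      by (intro integrable_mult_left integrable_std_norm)
    show "AE z in std_gauss_vec. norm (norm (A *v z)) \<le> norm (norm z * K)"
      using K by (intro AE_I2) (auto intro: order_trans[OF _ abs_ge_self])
  qed measurable
  then show ?thesis by (subst integrable_G) auto
qed

lemma mgf_G:
  fixes v :: "real ^ 'd::finite" and c :: real and A :: "real ^ 'd ^ 'd"
  shows "integrable (gauss_vec A) (\<lambda>y. exp (c * (v \<bullet> y)))"
    "(\<integral>y. exp (c * (v \<bullet> y)) \<partial>gauss_vec A) = exp (c\<^sup>2 * ((transpose A *v v) \<bullet> (transpose A *v v)) / 2)"
  using mgf_vec[of c "transpose A *v v"]
  by (simp_all add: integrable_G integral_G inner_matvec)

lemma stein_G:
  fixes h h' :: "real \<Rightarrow> real" and v :: "real ^ 'd::finite" and K :: real and A :: "real ^ 'd ^ 'd"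
  assumes dh: "\<And>t. (h has_real_derivative h' t) (at t)" and ch': "continuous_on UNIV h'"
    and bh: "\<And>t. \<bar>h t\<bar> \<le> K" and bh': "\<And>t. \<bar>h' t\<bar> \<le> K"
  shows "(\<integral>y. h (v \<bullet> y) *\<^sub>R y \<partial>gauss_vec A) = (\<integral>y. h' (v \<bullet> y) \<partial>gauss_vec A) *\<^sub>R (A *v (transpose A *v v))"
proof -
  have ch: "continuous_on UNIV h"
    using dh by (meson DERIV_isCont continuous_at_imp_continuous_on)
  have mh[measurable]: "h \<in> borel_measurable borel" using ch by (rule borel_measurable_continuous_onI)
  have mh'[measurable]: "h' \<in> borel_measurable borel" using ch' by (rule borel_measurable_continuous_onI)
  note S = stein_vec[OF dh ch' bh bh', of "transpose A *v v"]
  have "(\<integral>y. h (v \<bullet> y) *\<^sub>R y \<partial>gauss_vec A) = (\<integral>z. A *v (h ((transpose A *v v) \<bullet> z) *\<^sub>R z) \<partial>std_gauss_vec)"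
    by (subst integral_G) (auto simp: inner_matvec matvec_scaleR)
  also have "\<dots> = A *v (\<integral>z. h ((transpose A *v v) \<bullet> z) *\<^sub>R z \<partial>std_gauss_vec)"
    by (rule integral_bounded_linear[OF matrix_vector_mul_bounded_linear S(1)])
  also have "\<dots> = (\<integral>y. h' (v \<bullet> y) \<partial>gauss_vec A) *\<^sub>R (A *v (transpose A *v v))"
    unfolding S(2) by (simp add: matvec_scaleR integral_G inner_matvec)
  finally show ?thesis .
qed


definition Zf :: "real \<Rightarrow> real ^ 'd \<Rightarrow> nat set \<Rightarrow> (nat \<Rightarrow> real ^ 'd) \<Rightarrow> real" where
  "Zf a v K w = exp a + (\<Sum>k\<in>K. exp (v \<bullet> w k))"

lemma Zf_pos: "0 < Zf a v K w"
  unfolding Zf_def by (intro add_pos_nonneg sum_nonneg) auto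

lemma Zf_ge: "exp (v \<bullet> w j) \<le> Zf a v K w" if "finite K" "j \<in> K"
proof -
  have "exp (v \<bullet> w j) \<le> (\<Sum>k\<in>K. exp (v \<bullet> w k))"
    using that by (intro member_le_sum) auto
  then show ?thesis unfolding Zf_def by (smt (verit) exp_gt_zero)
qed

lemma measurable_Zf[measurable]:
  assumes "finite K"
  shows "Zf a v K \<in> borel_measurable (PiM K (\<lambda>_. gauss_vec (A :: real ^ 'd::finite ^ 'd)))"
  unfolding Zf_def[abs_def] by measurable

lemma softmax_deriv:
  fixes C :: real assumes C: "0 < C"
  shows "((\<lambda>t. exp t / (C + exp t)) has_real_derivative (exp t / (C + exp t) - (exp t / (C + exp t))\<^sup>2)) (at t)"
proof -
  have p: "0 < C + exp t" using C by (smt (verit) exp_gt_zero)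
  have d: "((\<lambda>t. exp t / (C + exp t)) has_real_derivative
     ((exp t * (C + exp t) - exp t * (0 + exp t)) / ((C + exp t) * (C + exp t)))) (at t)"
    using p by (intro derivative_eq_intros) (auto simp: add_nonneg_eq_0_iff)
  have alg: "(E * D - E * (0 + E)) / (D * D) = E / D - (E / D)\<^sup>2" if "D \<noteq> 0" for D E :: real
    using that by (simp add: field_simps power2_eq_square)
  have e: "(exp t * (C + exp t) - exp t * (0 + exp t)) / ((C + exp t) * (C + exp t))
     = exp t / (C + exp t) - (exp t / (C + exp t))\<^sup>2"
    using p by (intro alg) simp
  show ?thesis using d unfolding e .
qed

lemma softmax_bounds:
  fixes C :: real assumes C: "0 < C"
  shows "\<bar>exp t / (C + exp t)\<bar> \<le> 1" "\<bar>exp t / (C + exp t) - (exp t / (C + exp t))\<^sup>2\<bar> \<le> 1"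
proof -
  have p: "0 < C + exp t" using C by (smt (verit) exp_gt_zero)
  have h0: "0 \<le> exp t / (C + exp t)" using p by simp
  have h1: "exp t / (C + exp t) \<le> 1" using p C by simp
  show "\<bar>exp t / (C + exp t)\<bar> \<le> 1" using h0 h1 by (subst abs_of_nonneg) auto
  have "(exp t / (C + exp t))\<^sup>2 \<le> exp t / (C + exp t)"
    using mult_left_le[OF h1 h0] by (simp only: power2_eq_square)
  then show "\<bar>exp t / (C + exp t) - (exp t / (C + exp t))\<^sup>2\<bar> \<le> 1"
    using h0 h1 by (smt (verit) zero_le_power2)
qed

lemma softmax_cont:
  fixes C :: real assumes C: "0 < C"
  shows "continuous_on UNIV (\<lambda>t. exp t / (C + exp t) - (exp t / (C + exp t))\<^sup>2)"
proof -
  have p: "\<And>t. C + exp t \<noteq> 0" using C by (smt (verit) exp_gt_zero)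
  show ?thesis by (intro continuous_intros) (use p in auto)
qed


lemma integral_scaleR_left_vec:
  fixes c :: "real ^ 'd::finite" and f :: "'a \<Rightarrow> real"
  shows "(\<integral>x. f x *\<^sub>R c \<partial>M) = integral\<^sup>L M f *\<^sub>R c"
proof (rule integral_bounded_linear'[where T="\<lambda>r. r *\<^sub>R c" and T'="\<lambda>x. x \<bullet> (c /\<^sub>R (c \<bullet> c))"])
  show "bounded_linear (\<lambda>r::real. r *\<^sub>R c)" by (rule bounded_linear_scaleR_left)
  show "bounded_linear (\<lambda>x. x \<bullet> (c /\<^sub>R (c \<bullet> c)))"
    by (rule bounded_linear_inner_left)
  show "\<not> (\<forall>x. x *\<^sub>R c = 0) \<Longrightarrow> \<forall>x. (x *\<^sub>R c) \<bullet> (c /\<^sub>R (c \<bullet> c)) = x"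
    by auto
qed

lemma PS_G: "product_sigma_finite (\<lambda>_::nat. gauss_vec (A :: real ^ 'd::finite ^ 'd))"
  unfolding product_sigma_finite_def
  using G_prob prob_space_imp_sigma_finite by blast

lemma M_prob: "prob_space (PiM K (\<lambda>_::nat. gauss_vec (A :: real ^ 'd::finite ^ 'd)))"
  by (intro prob_space_PiM G_prob)

lemma integrable_M_comp:
  fixes f :: "real ^ 'd::finite \<Rightarrow> 'b::{banach, second_countable_topology}"
  assumes [measurable]: "f \<in> borel_measurable borel" and "integrable (gauss_vec A) f" and "j \<in> K"
  shows "integrable (PiM K (\<lambda>_::nat. gauss_vec (A :: real ^ 'd ^ 'd))) (\<lambda>w. f (w j))"
proof -
  have "distr (PiM K (\<lambda>_::nat. gauss_vec A)) (gauss_vec A) (\<lambda>w. w j) = gauss_vec A"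
    by (rule distr_PiM_component) (auto intro: G_prob assms)
  then have "integrable (distr (PiM K (\<lambda>_::nat. gauss_vec A)) (gauss_vec A) (\<lambda>w. w j)) f"
    using assms by simp
  then show ?thesis
    using assms(3) by (subst (asm) integrable_distr_eq) auto
qed

lemma stein_M:
  fixes A :: "real ^ 'd::finite ^ 'd" and v :: "real ^ 'd" and K :: "nat set" and a :: real
  assumes K: "finite K" "j \<in> K"
  defines "M \<equiv> PiM K (\<lambda>_. gauss_vec A)"
  defines "p \<equiv> \<lambda>w. exp (v \<bullet> w j) / Zf a v K w"
  shows "integrable M (\<lambda>w. p w *\<^sub>R w j)" "integrable M (\<lambda>w. p w - (p w)\<^sup>2)"
    "(\<integral>w. p w *\<^sub>R w j \<partial>M) = (\<integral>w. p w - (p w)\<^sup>2 \<partial>M) *\<^sub>R (A *v (transpose A *v v))"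
proof -
  interpret PS: product_sigma_finite "\<lambda>_::nat. gauss_vec A" by (rule PS_G)
  interpret MP: prob_space M unfolding M_def by (rule M_prob)
  have mp[measurable]: "p \<in> borel_measurable M"
    unfolding p_def M_def using K by measurable
  have "(\<lambda>w. w j) \<in> measurable M (gauss_vec A)"
    unfolding M_def using K(2) by (rule measurable_component_singleton)
  then have mj[measurable]: "(\<lambda>w. w j) \<in> borel_measurable M"
    by (simp add: measurable_cong_sets[OF refl sets_G])
  have p01: "0 \<le> p w" "p w \<le> 1" for w
    using Zf_pos[of a v K w] Zf_ge[OF K, of v w a] by (auto simp: p_def)
  have pp: "\<bar>p w - (p w)\<^sup>2\<bar> \<le> 1" for w
  proof -
    have "(p w)\<^sup>2 \<le> p w" using mult_left_le[OF p01(2) p01(1)] by (simp only: power2_eq_square)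
    then show ?thesis using p01[of w] by (smt (verit) zero_le_power2)
  qed
  show int1: "integrable M (\<lambda>w. p w *\<^sub>R w j)"
  proof (rule Bochner_Integration.integrable_bound)
    show "integrable M (\<lambda>w. norm (w j))"
      unfolding M_def by (rule integrable_M_comp[OF _ integrable_G_norm K(2)]) measurable
    show "AE w in M. norm (p w *\<^sub>R w j) \<le> norm (norm (w j))"
      using p01 by (intro AE_I2) (auto intro!: mult_left_le_one_le)
  qed measurable
  show int2: "integrable M (\<lambda>w. p w - (p w)\<^sup>2)"
    by (rule MP.integrable_const_bound[where B=1]) (auto intro: pp)
  define K' where "K' = K - {j}"
  have KK: "K = insert j K'" "j \<notin> K'" "finite K'" using K by (auto simp: K'_def)
  have MK: "M = PiM (insert j K') (\<lambda>_. gauss_vec A)" unfolding M_def using KK(1) by simp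
  have pupd: "p (w(j := y)) = exp (v \<bullet> y) / ((exp a + (\<Sum>k\<in>K'. exp (v \<bullet> w k))) + exp (v \<bullet> y))" for w y
  proof -
    have "Zf a v K (w(j := y)) = exp a + (exp (v \<bullet> y) + (\<Sum>k\<in>K'. exp (v \<bullet> (w(j := y)) k)))"
      unfolding Zf_def KK(1) using KK(2,3) by (simp add: sum.insert)
    also have "(\<Sum>k\<in>K'. exp (v \<bullet> (w(j := y)) k)) = (\<Sum>k\<in>K'. exp (v \<bullet> w k))"
      using KK(2) by (intro sum.cong) auto
    finally have Z: "Zf a v K (w(j := y)) = exp a + (exp (v \<bullet> y) + (\<Sum>k\<in>K'. exp (v \<bullet> w k)))" .
    show ?thesis unfolding p_def Z by (simp add: ac_simps)
  qed
  have "(\<integral>w. p w *\<^sub>R w j \<partial>M) = (\<integral>w. (\<integral>y. p (w(j := y)) *\<^sub>R (w(j := y)) j \<partial>gauss_vec A) \<partial>PiM K' (\<lambda>_. gauss_vec A))"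
    unfolding MK by (rule PS.product_integral_insert[OF KK(3,2)]) (use int1 MK in simp)
  also have "\<dots> = (\<integral>w. (\<integral>y. p (w(j := y)) - (p (w(j := y)))\<^sup>2 \<partial>gauss_vec A) *\<^sub>R (A *v (transpose A *v v)) \<partial>PiM K' (\<lambda>_. gauss_vec A))"
  proof (rule Bochner_Integration.integral_cong[OF refl])
    fix w :: "nat \<Rightarrow> real ^ 'd"
    define C where "C = exp a + (\<Sum>k\<in>K'. exp (v \<bullet> w k))"
    have C: "0 < C" unfolding C_def by (intro add_pos_nonneg sum_nonneg) auto
    have "(\<integral>y. (exp (v \<bullet> y) / (C + exp (v \<bullet> y))) *\<^sub>R y \<partial>gauss_vec A)
      = (\<integral>y. exp (v \<bullet> y) / (C + exp (v \<bullet> y)) - (exp (v \<bullet> y) / (C + exp (v \<bullet> y)))\<^sup>2 \<partial>gauss_vec A) *\<^sub>R (A *v (transpose A *v v))"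
      by (rule stein_G[where h="\<lambda>t. exp t / (C + exp t)" and K=1, OF softmax_deriv[OF C] softmax_cont[OF C] softmax_bounds[OF C]])
    then show "(\<integral>y. p (w(j := y)) *\<^sub>R (w(j := y)) j \<partial>gauss_vec A) =
      (\<integral>y. p (w(j := y)) - (p (w(j := y)))\<^sup>2 \<partial>gauss_vec A) *\<^sub>R (A *v (transpose A *v v))"
      by (simp only: pupd C_def fun_upd_same)
  qed
  also have "\<dots> = (\<integral>w. (\<integral>y. p (w(j := y)) - (p (w(j := y)))\<^sup>2 \<partial>gauss_vec A) \<partial>PiM K' (\<lambda>_. gauss_vec A)) *\<^sub>R (A *v (transpose A *v v))"
    by (rule integral_scaleR_left_vec)
  also have "(\<integral>w. (\<integral>y. p (w(j := y)) - (p (w(j := y)))\<^sup>2 \<partial>gauss_vec A) \<partial>PiM K' (\<lambda>_. gauss_vec A))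
     = (\<integral>w. p w - (p w)\<^sup>2 \<partial>M)"
    unfolding MK by (rule PS.product_integral_insert[OF KK(3,2), symmetric]) (use int2 MK in simp)
  finally show "(\<integral>w. p w *\<^sub>R w j \<partial>M) = (\<integral>w. p w - (p w)\<^sup>2 \<partial>M) *\<^sub>R (A *v (transpose A *v v))" .
qed


lemma prod_mgf:
  fixes A :: "real ^ 'd::finite ^ 'd" and v :: "real ^ 'd" and K :: "nat set" and c :: "nat \<Rightarrow> real"
  assumes K: "finite K"
  shows "integrable (PiM K (\<lambda>_. gauss_vec A)) (\<lambda>w. \<Prod>k\<in>K. exp (c k * (v \<bullet> w k)))"
    "(\<integral>w. (\<Prod>k\<in>K. exp (c k * (v \<bullet> w k))) \<partial>PiM K (\<lambda>_. gauss_vec A))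
      = (\<Prod>k\<in>K. exp ((c k)\<^sup>2 * ((transpose A *v v) \<bullet> (transpose A *v v)) / 2))"
proof -
  interpret PS: product_sigma_finite "\<lambda>_::nat. gauss_vec A" by (rule PS_G)
  show "integrable (PiM K (\<lambda>_. gauss_vec A)) (\<lambda>w. \<Prod>k\<in>K. exp (c k * (v \<bullet> w k)))"
    by (rule PS.product_integrable_prod[OF K, where f="\<lambda>k y. exp (c k * (v \<bullet> y))"]) (rule mgf_G(1))
  have "(\<integral>w. (\<Prod>k\<in>K. exp (c k * (v \<bullet> w k))) \<partial>PiM K (\<lambda>_. gauss_vec A))
      = (\<Prod>k\<in>K. (\<integral>y. exp (c k * (v \<bullet> y)) \<partial>gauss_vec A))"
    by (rule PS.product_integral_prod[OF K, where f="\<lambda>k y. exp (c k * (v \<bullet> y))"]) (rule mgf_G(1))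
  also have "\<dots> = (\<Prod>k\<in>K. exp ((c k)\<^sup>2 * ((transpose A *v v) \<bullet> (transpose A *v v)) / 2))"
    by (rule prod.cong[OF refl], rule mgf_G(2))
  finally show "(\<integral>w. (\<Prod>k\<in>K. exp (c k * (v \<bullet> w k))) \<partial>PiM K (\<lambda>_. gauss_vec A))
      = (\<Prod>k\<in>K. exp ((c k)\<^sup>2 * ((transpose A *v v) \<bullet> (transpose A *v v)) / 2))" .
qed

lemma jensen_exp:
  fixes s :: "nat \<Rightarrow> real"
  assumes K: "finite K" "K \<noteq> {}"
  shows "real (card K) * exp ((\<Sum>k\<in>K. s k) / real (card K)) \<le> (\<Sum>k\<in>K. exp (s k))"
proof -
  have m: "0 < real (card K)" using K by (simp add: card_gt_0_iff)
  have "exp (\<Sum>k\<in>K. (1 / real (card K)) *\<^sub>R s k) \<le> (\<Sum>k\<in>K. (1 / real (card K)) * exp (s k))"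
    by (rule convex_on_sum[OF K exp_convex]) (use m in auto)
  then have "exp ((\<Sum>k\<in>K. s k) / real (card K)) \<le> (\<Sum>k\<in>K. exp (s k)) / real (card K)"
    by (simp add: sum_distrib_left[symmetric] sum_divide_distrib[symmetric])
  then show ?thesis using m by (simp add: field_simps)
qed


lemma inv_sum_exp_bound:
  fixes s :: "nat \<Rightarrow> real"
  assumes K: "finite K" "K \<noteq> {}"
  shows "1 / (\<Sum>k\<in>K. exp (s k)) \<le> (1 / real (card K)) * exp (- (\<Sum>k\<in>K. s k) / real (card K))"
proof -
  have m: "0 < real (card K)" using K by (simp add: card_gt_0_iff)
  have pos: "0 < real (card K) * exp ((\<Sum>k\<in>K. s k) / real (card K))" using m by simp
  have "1 / (\<Sum>k\<in>K. exp (s k)) \<le> 1 / (real (card K) * exp ((\<Sum>k\<in>K. s k) / real (card K)))"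
  proof (rule divide_left_mono[OF jensen_exp[OF K]])
    have "0 < (\<Sum>k\<in>K. exp (s k))" using K by (intro sum_pos) auto
    then show "0 < (\<Sum>k\<in>K. exp (s k)) * (real (card K) * exp ((\<Sum>k\<in>K. s k) / real (card K)))"
      using pos by simp
  qed simp
  also have "\<dots> = (1 / real (card K)) * exp (- (\<Sum>k\<in>K. s k) / real (card K))"
    by (simp add: exp_minus field_simps)
  finally show ?thesis .
qed

lemma prod_exp_lin: "(\<Prod>k\<in>K. exp (c k * x k)) = exp (\<Sum>k\<in>K. c k * x k)" for c x :: "nat \<Rightarrow> real"
  by (cases "finite K") (simp_all add: exp_sum)

lemma P1_bound:
  fixes A :: "real ^ 'd::finite ^ 'd" and v :: "real ^ 'd" and K :: "nat set" and a :: real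
  assumes K: "finite K" "K \<noteq> {}"
  defines "M \<equiv> PiM K (\<lambda>_. gauss_vec A)"
  defines "m \<equiv> real (card K)"
  defines "q \<equiv> (transpose A *v v) \<bullet> (transpose A *v v)"
  shows "integrable M (\<lambda>w. exp a / Zf a v K w)"
    "0 \<le> (\<integral>w. exp a / Zf a v K w \<partial>M)"
    "(\<integral>w. exp a / Zf a v K w \<partial>M) \<le> exp a / m * exp (q / (2 * m))"
proof -
  interpret MP: prob_space M unfolding M_def by (rule M_prob)
  have m: "0 < m" using K by (simp add: m_def card_gt_0_iff)
  have mZ[measurable]: "Zf a v K \<in> borel_measurable M" unfolding M_def using K by measurable
  have b: "norm (exp a / Zf a v K w) \<le> 1" for w
  proof -
    have z: "exp a \<le> Zf a v K w" unfolding Zf_def by (simp add: sum_nonneg)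
    have z0: "0 < Zf a v K w" by (rule Zf_pos)
    have "0 \<le> exp a / Zf a v K w" using z0 by simp
    moreover have "exp a / Zf a v K w \<le> 1" using z z0 by simp
    ultimately show ?thesis by simp
  qed
  show int: "integrable M (\<lambda>w. exp a / Zf a v K w)"
  proof (rule MP.integrable_const_bound[where B=1])
    show "AE w in M. norm (exp a / Zf a v K w) \<le> 1" by (intro AE_I2 b)
  qed measurable
  show "0 \<le> (\<integral>w. exp a / Zf a v K w \<partial>M)"
    by (intro integral_nonneg_AE AE_I2) (simp add: less_imp_le[OF Zf_pos])
  define c where "c = (\<lambda>k::nat. - 1 / m)"
  note PM = prod_mgf[OF K(1), of A c v, folded M_def q_def]
  have pw: "exp a / Zf a v K w \<le> exp a / m * (\<Prod>k\<in>K. exp (c k * (v \<bullet> w k)))" for w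
  proof -
    have "exp a / Zf a v K w \<le> exp a * (1 / (\<Sum>k\<in>K. exp (v \<bullet> w k)))"
    proof -
      have s: "0 < (\<Sum>k\<in>K. exp (v \<bullet> w k))" using K by (intro sum_pos) auto
      show ?thesis unfolding Zf_def using s by (simp add: frac_le)
    qed
    also have "\<dots> \<le> exp a * ((1 / m) * exp (- (\<Sum>k\<in>K. v \<bullet> w k) / m))"
      by (intro mult_left_mono inv_sum_exp_bound[OF K, unfolded m_def[symmetric]]) auto
    also have "\<dots> = exp a / m * (\<Prod>k\<in>K. exp (c k * (v \<bullet> w k)))"
      unfolding prod_exp_lin c_def sum_distrib_left[symmetric] by simp
    finally show ?thesis .
  qed
  have "(\<integral>w. exp a / Zf a v K w \<partial>M) \<le> (\<integral>w. exp a / m * (\<Prod>k\<in>K. exp (c k * (v \<bullet> w k))) \<partial>M)"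
    by (intro integral_mono int integrable_mult_right PM(1) pw)
  also have "\<dots> = exp a / m * (\<Prod>k\<in>K. exp ((c k)\<^sup>2 * q / 2))"
    by (simp add: PM(2))
  also have "(\<Prod>k\<in>K. exp ((c k)\<^sup>2 * q / 2)) = exp (q / (2 * m))"
  proof -
    have "(\<Prod>k\<in>K. exp ((c k)\<^sup>2 * q / 2)) = exp ((1 / m)\<^sup>2 * q / 2) ^ card K"
      by (simp add: c_def)
    also have "\<dots> = exp (m * ((1 / m)\<^sup>2 * q / 2))"
      unfolding m_def by (rule exp_of_nat_mult[symmetric])
    also have "m * ((1 / m)\<^sup>2 * q / 2) = q / (2 * m)"
      using m by (simp add: field_simps power2_eq_square)
    finally show ?thesis .
  qed
  finally show "(\<integral>w. exp a / Zf a v K w \<partial>M) \<le> exp a / m * exp (q / (2 * m))" .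
qed


lemma Pj2_bound:
  fixes A :: "real ^ 'd::finite ^ 'd" and v :: "real ^ 'd" and K :: "nat set" and a :: real
  assumes K: "finite K" "j \<in> K"
  defines "M \<equiv> PiM K (\<lambda>_. gauss_vec A)"
  defines "m \<equiv> real (card K)"
  defines "q \<equiv> (transpose A *v v) \<bullet> (transpose A *v v)"
  defines "p \<equiv> \<lambda>w. exp (v \<bullet> w j) / Zf a v K w"
  shows "integrable M (\<lambda>w. (p w)\<^sup>2)"
    "(\<integral>w. (p w)\<^sup>2 \<partial>M) \<le> exp (2 * q) / m\<^sup>2"
proof -
  interpret MP: prob_space M unfolding M_def by (rule M_prob)
  have Kne: "K \<noteq> {}" using K by auto
  have m: "0 < m" using K by (auto simp: m_def card_gt_0_iff)
  have q: "0 \<le> q" unfolding q_def by simp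
  have mp[measurable]: "p \<in> borel_measurable M"
    unfolding p_def M_def using K by measurable
  have p01: "0 \<le> p w" "p w \<le> 1" for w
    using Zf_pos[of a v K w] Zf_ge[OF K, of v w a] by (auto simp: p_def)
  show int: "integrable M (\<lambda>w. (p w)\<^sup>2)"
  proof (rule MP.integrable_const_bound[where B=1])
    show "AE w in M. norm ((p w)\<^sup>2) \<le> 1"
    proof (intro AE_I2)
      fix w
      have "(p w)\<^sup>2 \<le> 1" using p01[of w] by (simp add: power_le_one)
      then show "norm ((p w)\<^sup>2) \<le> 1" by simp
    qed
  qed measurable
  define c where "c = (\<lambda>k::nat. (if k = j then 2 else 0) - 2 / m)"
  note PM = prod_mgf[OF K(1), of A c v, folded M_def q_def]
  have lin: "(\<Sum>k\<in>K. c k * x k) = 2 * x j - 2 / m * (\<Sum>k\<in>K. x k)" for x :: "nat \<Rightarrow> real"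
  proof -
    have "c k * x k = (if k = j then 2 * x k else 0) - 2 / m * x k" for k
      by (simp add: c_def algebra_simps)
    then have "(\<Sum>k\<in>K. c k * x k) = (\<Sum>k\<in>K. (if k = j then 2 * x k else 0)) - (\<Sum>k\<in>K. 2 / m * x k)"
      by (simp add: sum_subtractf)
    also have "\<dots> = 2 * x j - 2 / m * (\<Sum>k\<in>K. x k)"
      using K by (simp add: sum_distrib_left)
    finally show ?thesis .
  qed
  have sq: "(\<Sum>k\<in>K. (c k)\<^sup>2) \<le> 4"
  proof -
    have "(c k)\<^sup>2 = (if k = j then 4 - 8 / m else 0) + 4 / m\<^sup>2" for k
      using m by (auto simp: c_def power2_eq_square field_simps)
    then have "(\<Sum>k\<in>K. (c k)\<^sup>2) = (4 - 8 / m) + m * (4 / m\<^sup>2)"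
      using K by (simp add: sum.distrib m_def)
    also have "\<dots> = 4 - 4 / m" using m by (simp add: field_simps power2_eq_square)
    finally show ?thesis using m by simp
  qed
  have pw: "(p w)\<^sup>2 \<le> 1 / m\<^sup>2 * (\<Prod>k\<in>K. exp (c k * (v \<bullet> w k)))" for w
  proof -
    define S where "S = (\<Sum>k\<in>K. v \<bullet> w k)"
    have s: "0 < (\<Sum>k\<in>K. exp (v \<bullet> w k))" using K by (intro sum_pos) auto
    have "p w \<le> exp (v \<bullet> w j) * (1 / (\<Sum>k\<in>K. exp (v \<bullet> w k)))"
      unfolding p_def Zf_def using s by (simp add: frac_le)
    also have "\<dots> \<le> exp (v \<bullet> w j) * ((1 / m) * exp (- S / m))"
      unfolding S_def by (intro mult_left_mono inv_sum_exp_bound[OF K(1) Kne, unfolded m_def[symmetric]]) auto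
    finally have "(p w)\<^sup>2 \<le> (exp (v \<bullet> w j) * ((1 / m) * exp (- S / m)))\<^sup>2"
      using p01[of w] by (intro power_mono) auto
    also have "\<dots> = 1 / m\<^sup>2 * exp (2 * (v \<bullet> w j) - 2 / m * S)"
    proof -
      have "(exp (v \<bullet> w j) * exp (- S / m))\<^sup>2 = exp (2 * (v \<bullet> w j) - 2 / m * S)"
        by (simp only: power2_eq_square mult_exp_exp) (rule arg_cong[where f=exp], simp add: field_simps)
      then show ?thesis by (simp add: power_mult_distrib power_divide)
    qed
    also have "\<dots> = 1 / m\<^sup>2 * (\<Prod>k\<in>K. exp (c k * (v \<bullet> w k)))"
      unfolding prod_exp_lin lin S_def ..
    finally show ?thesis .
  qed
  have "(\<integral>w. (p w)\<^sup>2 \<partial>M) \<le> (\<integral>w. 1 / m\<^sup>2 * (\<Prod>k\<in>K. exp (c k * (v \<bullet> w k))) \<partial>M)"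
    by (intro integral_mono int integrable_mult_right PM(1) pw)
  also have "\<dots> = 1 / m\<^sup>2 * (\<Prod>k\<in>K. exp ((c k)\<^sup>2 * q / 2))"
    by (simp add: PM(2))
  also have "(\<Prod>k\<in>K. exp ((c k)\<^sup>2 * q / 2)) = exp (q / 2 * (\<Sum>k\<in>K. (c k)\<^sup>2))"
    using K by (simp add: exp_sum sum_distrib_left ac_simps)
  also have "\<dots> \<le> exp (2 * q)"
    using mult_left_mono[OF sq q] by simp
  finally show "(\<integral>w. (p w)\<^sup>2 \<partial>M) \<le> exp (2 * q) / m\<^sup>2"
    using m by (simp add: divide_right_mono)
qed


lemma final_ineq:
  fixes P1 Q m q a o1 o2 X n1 n2 :: real
  assumes P1: "0 \<le> P1" "P1 \<le> exp a / m * exp (q / (2 * m))"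
    and Q: "0 \<le> Q" "Q \<le> exp (2 * q) / m"
    and m: "0 < m" and q: "0 \<le> q"
    and n1: "0 \<le> n1" "n1 \<le> o1 * X" and n2: "0 \<le> n2" "n2 \<le> o2 * X"
    and o: "0 \<le> o1" "0 \<le> o2" and X: "0 \<le> X"
  shows "(P1 * n1 + Q * n2)\<^sup>2 \<le> 2 * o1\<^sup>2 / m\<^sup>2 * exp (2 / m * q) * exp (2 * a) * X\<^sup>2
      + 2 * o2\<^sup>2 / m\<^sup>2 * exp (4 * q) * X\<^sup>2"
proof -
  have "(P1 * n1 + Q * n2)\<^sup>2 \<le> 2 * (P1 * n1)\<^sup>2 + 2 * (Q * n2)\<^sup>2"
    by (smt (verit) zero_le_power2 power2_diff power2_sum)
  also have "(P1 * n1)\<^sup>2 \<le> (exp a / m * exp (q / (2 * m)) * (o1 * X))\<^sup>2"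
    using P1 n1 by (intro power_mono mult_mono) auto
  also have "(exp a / m * exp (q / (2 * m)) * (o1 * X))\<^sup>2 = o1\<^sup>2 / m\<^sup>2 * exp (q / m) * exp (2 * a) * X\<^sup>2"
  proof -
    have e1: "(exp a)\<^sup>2 = exp (2 * a)" by (simp add: power2_eq_square mult_exp_exp)
    have e2: "(exp (q / (2 * m)))\<^sup>2 = exp (q / m)" by (simp add: power2_eq_square mult_exp_exp)
    show ?thesis unfolding power_mult_distrib power_divide e1 e2 by (simp add: field_simps)
  qed
  also have "\<dots> \<le> o1\<^sup>2 / m\<^sup>2 * exp (2 / m * q) * exp (2 * a) * X\<^sup>2"
  proof -
    have "q / m \<le> 2 / m * q" using m q by (simp add: field_simps)
    then have "exp (q / m) \<le> exp (2 / m * q)" by simp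
    then show ?thesis by (intro mult_right_mono mult_left_mono) (auto simp: m)
  qed
  also have "(Q * n2)\<^sup>2 \<le> (exp (2 * q) / m * (o2 * X))\<^sup>2"
    using Q n2 by (intro power_mono mult_mono) auto
  also have "(exp (2 * q) / m * (o2 * X))\<^sup>2 = o2\<^sup>2 / m\<^sup>2 * exp (4 * q) * X\<^sup>2"
  proof -
    have e: "(exp (2 * q))\<^sup>2 = exp (4 * q)" by (simp add: power2_eq_square mult_exp_exp)
    show ?thesis unfolding power_mult_distrib power_divide e by (simp add: field_simps)
  qed
  finally show ?thesis by simp
qed


theorem lemma11:
  fixes n :: nat and Sigma A B :: "real ^ 'd ^ 'd" and x1 :: "real ^ 'd"
  assumes "n \<ge> 2"
    and "transpose Sigma = Sigma"
    and "\<forall>v. 0 \<le> v \<bullet> (Sigma *v v)"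
    and "A ** transpose A = Sigma"
  shows "(norm ((\<integral>xs. attn_mu1 n B x1 xs \<partial>(PiM {2..n} (\<lambda>_. gauss_vec A)))
                 - (Sigma ** transpose B) *v x1))\<^sup>2
         \<le> 2 * (op_norm (mat 1 - Sigma ** transpose B))\<^sup>2 / (real n - 1)\<^sup>2
             * exp (2 / (real n - 1) * (x1 \<bullet> ((B ** Sigma ** transpose B) *v x1)))
             * exp (2 * (x1 \<bullet> (B *v x1))) * (norm x1)\<^sup>2
           + 2 * (op_norm (Sigma ** transpose B))\<^sup>2 / (real n - 1)\<^sup>2
             * exp (4 * (x1 \<bullet> ((B ** Sigma ** transpose B) *v x1))) * (norm x1)\<^sup>2"
proof -
  note n2 = assms(1) and AA = assms(4)
  define K where "K = {2..n}"
  define M where "M = PiM K (\<lambda>_. gauss_vec A)"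
  define v where "v = transpose B *v x1"
  define a where "a = x1 \<bullet> (B *v x1)"
  define u where "u = transpose A *v v"
  define q where "q = u \<bullet> u"
  define m where "m = real (card K)"
  define Au where "Au = A *v u"
  have finK: "finite K" and Kne: "K \<noteq> {}" and oneK: "1 \<notin> K"
    using n2 by (auto simp: K_def)
  have m_eq: "m = real n - 1"
    using n2 by (simp add: m_def K_def of_nat_diff)
  have m0: "0 < m" using n2 m_eq by simp
  have q0: "0 \<le> q" unfolding q_def by simp
  interpret MP: prob_space M unfolding M_def by (rule M_prob)
  define p where "p = (\<lambda>j w. exp (v \<bullet> w j) / Zf a v K w)"
  define p1 where "p1 = (\<lambda>w. exp a / Zf a v K w)"
  have ip: "x1 \<bullet> (B *v y) = v \<bullet> y" for y
    unfolding v_def by (rule inner_matvec)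
  have attn: "attn_mu1 n B x1 w = p1 w *\<^sub>R x1 + (\<Sum>j\<in>K. p j w *\<^sub>R w j)" for w
  proof -
    have I: "{1..n} = insert 1 K" using n2 by (auto simp: K_def)
    have K1: "k \<in> K \<Longrightarrow> k \<noteq> 1" for k using oneK by auto
    have Z: "(\<Sum>k=1..n. exp (x1 \<bullet> (B *v (if k = 1 then x1 else w k)))) = Zf a v K w"
    proof -
      have "(\<Sum>k=1..n. exp (x1 \<bullet> (B *v (if k = 1 then x1 else w k))))
          = exp a + (\<Sum>k\<in>K. exp (x1 \<bullet> (B *v (if k = 1 then x1 else w k))))"
        unfolding I using finK oneK by (simp add: a_def)
      also have "(\<Sum>k\<in>K. exp (x1 \<bullet> (B *v (if k = 1 then x1 else w k)))) = (\<Sum>k\<in>K. exp (v \<bullet> w k))"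
        by (rule sum.cong[OF refl]) (use oneK in \<open>auto simp: ip\<close>)
      finally show ?thesis unfolding Zf_def .
    qed
    have "(\<Sum>j=1..n. (exp (x1 \<bullet> (B *v (if j = 1 then x1 else w j))) / Zf a v K w) *\<^sub>R (if j = 1 then x1 else w j))
        = (exp a / Zf a v K w) *\<^sub>R x1 + (\<Sum>j\<in>K. (exp (x1 \<bullet> (B *v (if j = 1 then x1 else w j))) / Zf a v K w) *\<^sub>R (if j = 1 then x1 else w j))"
      unfolding I using finK oneK by (simp add: a_def)
    also have "(\<Sum>j\<in>K. (exp (x1 \<bullet> (B *v (if j = 1 then x1 else w j))) / Zf a v K w) *\<^sub>R (if j = 1 then x1 else w j))
        = (\<Sum>j\<in>K. p j w *\<^sub>R w j)"
      by (rule sum.cong[OF refl]) (use oneK in \<open>auto simp: ip p_def\<close>)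
    finally show ?thesis
      unfolding attn_mu1_def Let_def Z p1_def .
  qed
  have SM: "integrable M (\<lambda>w. p j w *\<^sub>R w j)" "integrable M (\<lambda>w. p j w - (p j w)\<^sup>2)"
    "(\<integral>w. p j w *\<^sub>R w j \<partial>M) = (\<integral>w. p j w - (p j w)\<^sup>2 \<partial>M) *\<^sub>R Au"
    if "j \<in> K" for j
    using stein_M[OF finK that, where A=A and v=v and a=a] unfolding M_def p_def Au_def u_def by auto
  have PJ: "integrable M (\<lambda>w. (p j w)\<^sup>2)" "(\<integral>w. (p j w)\<^sup>2 \<partial>M) \<le> exp (2 * q) / m\<^sup>2"
    if "j \<in> K" for j
    using Pj2_bound[OF finK that, where A=A and v=v and a=a] unfolding M_def p_def m_def q_def u_def by auto
  have intp: "integrable M (p j)" if "j \<in> K" for j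
    using Bochner_Integration.integrable_add[OF SM(2)[OF that] PJ(1)[OF that]] by simp
  have P1: "integrable M p1" "0 \<le> integral\<^sup>L M p1" "integral\<^sup>L M p1 \<le> exp a / m * exp (q / (2 * m))"
    using P1_bound[OF finK Kne, where A=A and v=v and a=a] unfolding M_def p1_def m_def q_def u_def by auto
  define P where "P = integral\<^sup>L M p1"
  define Q where "Q = (\<Sum>j\<in>K. (\<integral>w. (p j w)\<^sup>2 \<partial>M))"
  have sum1: "P + (\<Sum>j\<in>K. integral\<^sup>L M (p j)) = 1"
  proof -
    have pw: "p1 w + (\<Sum>j\<in>K. p j w) = 1" for w
    proof -
      have "p1 w + (\<Sum>j\<in>K. p j w) = (exp a + (\<Sum>j\<in>K. exp (v \<bullet> w j))) / Zf a v K w"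
        unfolding p1_def p_def by (simp only: sum_divide_distrib[symmetric] add_divide_distrib[symmetric])
      also have "\<dots> = Zf a v K w / Zf a v K w" unfolding Zf_def ..
      finally have "p1 w + (\<Sum>j\<in>K. p j w) = Zf a v K w / Zf a v K w" .
      then show ?thesis using Zf_pos[of a v K w] by simp
    qed
    have "(\<integral>w. p1 w + (\<Sum>j\<in>K. p j w) \<partial>M) = P + (\<Sum>j\<in>K. integral\<^sup>L M (p j))"
      unfolding P_def using P1(1) intp by (simp add: Bochner_Integration.integral_sum)
    moreover have "(\<integral>w. p1 w + (\<Sum>j\<in>K. p j w) \<partial>M) = 1"
      by (simp add: pw MP.prob_space)
    ultimately show ?thesis by simp
  qed
  have E: "(\<integral>w. attn_mu1 n B x1 w \<partial>M) = P *\<^sub>R x1 + ((1 - P) - Q) *\<^sub>R Au"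
  proof -
    have "(\<integral>w. attn_mu1 n B x1 w \<partial>M) = (\<integral>w. p1 w *\<^sub>R x1 + (\<Sum>j\<in>K. p j w *\<^sub>R w j) \<partial>M)"
      by (simp add: attn)
    also have "\<dots> = (\<integral>w. p1 w *\<^sub>R x1 \<partial>M) + (\<Sum>j\<in>K. (\<integral>w. p j w *\<^sub>R w j \<partial>M))"
      using P1(1) SM(1) by (simp add: Bochner_Integration.integral_sum)
    also have "(\<integral>w. p1 w *\<^sub>R x1 \<partial>M) = P *\<^sub>R x1"
      unfolding P_def by (rule integral_scaleR_left_vec)
    also have "(\<Sum>j\<in>K. (\<integral>w. p j w *\<^sub>R w j \<partial>M)) = (\<Sum>j\<in>K. (integral\<^sup>L M (p j) - (\<integral>w. (p j w)\<^sup>2 \<partial>M)) *\<^sub>R Au)"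
    proof (rule sum.cong[OF refl])
      fix j assume j: "j \<in> K"
      show "(\<integral>w. p j w *\<^sub>R w j \<partial>M) = (integral\<^sup>L M (p j) - (\<integral>w. (p j w)\<^sup>2 \<partial>M)) *\<^sub>R Au"
        unfolding SM(3)[OF j] using intp[OF j] PJ(1)[OF j] by (simp add: Bochner_Integration.integral_diff)
    qed
    also have "\<dots> = ((\<Sum>j\<in>K. integral\<^sup>L M (p j)) - Q) *\<^sub>R Au"
      by (simp add: Q_def scaleR_sum_left[symmetric] sum_subtractf)
    also have "(\<Sum>j\<in>K. integral\<^sup>L M (p j)) = 1 - P" using sum1 by simp
    finally show ?thesis .
  qed
  have AuS: "(Sigma ** transpose B) *v x1 = Au"
    unfolding Au_def u_def v_def AA[symmetric] by (simp only: matrix_vector_mul_assoc[symmetric])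
  have qS: "x1 \<bullet> ((B ** Sigma ** transpose B) *v x1) = q"
  proof -
    have "(B ** Sigma ** transpose B) *v x1 = B *v (A *v u)"
      unfolding u_def v_def AA[symmetric] by (simp only: matrix_vector_mul_assoc[symmetric])
    then have "x1 \<bullet> ((B ** Sigma ** transpose B) *v x1) = v \<bullet> (A *v u)" by (simp add: ip)
    also have "\<dots> = q" unfolding q_def u_def by (rule inner_matvec)
    finally show ?thesis .
  qed
  have W1: "x1 - Au = (mat 1 - Sigma ** transpose B) *v x1"
    by (simp add: matrix_vector_mult_diff_rdistrib AuS)
  have Ediff: "(\<integral>w. attn_mu1 n B x1 w \<partial>M) - (Sigma ** transpose B) *v x1 = P *\<^sub>R (x1 - Au) - Q *\<^sub>R Au"
    unfolding E AuS by (simp add: algebra_simps)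
  have Q0: "0 \<le> Q" unfolding Q_def by (intro sum_nonneg integral_nonneg_AE AE_I2) simp
  have Qle: "Q \<le> exp (2 * q) / m"
  proof -
    have "Q \<le> (\<Sum>j\<in>K. exp (2 * q) / m\<^sup>2)" unfolding Q_def by (intro sum_mono PJ(2))
    also have "\<dots> = m * (exp (2 * q) / m\<^sup>2)" by (simp add: m_def)
    also have "\<dots> = exp (2 * q) / m" using m0 by (simp add: power2_eq_square)
    finally show ?thesis .
  qed
  have onorm1: "norm ((mat 1 - Sigma ** transpose B) *v x1) \<le> op_norm (mat 1 - Sigma ** transpose B) * norm x1"
    unfolding op_norm_def by (rule onorm[OF matrix_vector_mul_bounded_linear])
  have onorm2: "norm ((Sigma ** transpose B) *v x1) \<le> op_norm (Sigma ** transpose B) * norm x1"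
    unfolding op_norm_def by (rule onorm[OF matrix_vector_mul_bounded_linear])
  have o1: "0 \<le> op_norm (mat 1 - Sigma ** transpose B)"
    unfolding op_norm_def by (rule onorm_pos_le[OF matrix_vector_mul_bounded_linear])
  have o2: "0 \<le> op_norm (Sigma ** transpose B)"
    unfolding op_norm_def by (rule onorm_pos_le[OF matrix_vector_mul_bounded_linear])
  have tri: "norm (P *\<^sub>R (x1 - Au) - Q *\<^sub>R Au) \<le> P * norm (x1 - Au) + Q * norm Au"
  proof -
    have "norm (P *\<^sub>R (x1 - Au) - Q *\<^sub>R Au) \<le> norm (P *\<^sub>R (x1 - Au)) + norm (Q *\<^sub>R Au)"
      by (rule norm_triangle_ineq4)
    also have "\<dots> = P * norm (x1 - Au) + Q * norm Au"
      using P1(2) Q0 by (simp add: P_def)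
    finally show ?thesis .
  qed
  have "(norm (P *\<^sub>R (x1 - Au) - Q *\<^sub>R Au))\<^sup>2 \<le> (P * norm (x1 - Au) + Q * norm Au)\<^sup>2"
    using tri by (intro power_mono) auto
  also have "\<dots> \<le> 2 * (op_norm (mat 1 - Sigma ** transpose B))\<^sup>2 / m\<^sup>2 * exp (2 / m * q) * exp (2 * a) * (norm x1)\<^sup>2
      + 2 * (op_norm (Sigma ** transpose B))\<^sup>2 / m\<^sup>2 * exp (4 * q) * (norm x1)\<^sup>2"
  proof -
    have n1b: "norm (x1 - Au) \<le> op_norm (mat 1 - Sigma ** transpose B) * norm x1"
      unfolding W1 by (rule onorm1)
    have n2b: "norm Au \<le> op_norm (Sigma ** transpose B) * norm x1"
      unfolding AuS[symmetric] by (rule onorm2)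
    show ?thesis
      by (rule final_ineq[OF P1(2,3)[folded P_def] Q0 Qle m0 q0 norm_ge_zero n1b norm_ge_zero n2b o1 o2 norm_ge_zero])
  qed
  finally show ?thesis
    unfolding Ediff[unfolded M_def K_def, symmetric] qS m_eq[symmetric] a_def .
qed

end
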